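(* Let $\Omega\subseteq\mathbb{R}^N$ be open and bounded, $\sigma(x):=\mathrm{dist}(x,\partial\Omega)$, and let $\eta\in C^\infty(\Omega)$ be such that there exists $0<\kappa<1$ with $\kappa\sigma(x)^2\le\eta(x)\le\sigma(x)^2$ for every $x\in\Omega$. Let $T_n$ be as in the context. Then for every $f\in L^1(\Omega)$, $T_nf\to f$ in $L^1(\Omega)$ as $n\to\infty$.
   Context: $\rho\in C_c^\infty(\mathbb{R}^N)$ satisfies $0\le\rho\le1$, $\rho(x)=0$ iff $|x|\ge1$, $\rho$ is radially symmetric, and $\rho(x)\ge\rho(1/2)$ for all $|x|<1/2$. Set $M_\rho:=(\int_{B_1(0)}\rho(y)\,dy)^{-1}$. For $x\in\Omega$ and $n\in\mathbb{N}$ let $C_n(x):=M_\rho n^N/\eta(x)^N$, and for $f\in L^1_{loc}(\Omega)$ let $T_nf(x):=C_n(x)\int_\Omega\rho\big(\frac{x-y}{\frac1n\eta(x)}\big)f(y)\,dy$. *)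

theory Defs
  imports "HOL-Analysis.Analysis"
begin

text \<open>C-infinity on an open set S: all iterated Frechet derivatives exist.
  D vs x is the iterated derivative of f at x applied to the directions in vs
  (most recently differentiated direction first).\<close>
definition smooth_on :: "'a::euclidean_space set \<Rightarrow> ('a \<Rightarrow> real) \<Rightarrow> bool" where
  "smooth_on S f \<longleftrightarrow>
     (\<exists>D :: 'a list \<Rightarrow> 'a \<Rightarrow> real.
        (\<forall>x\<in>S. D [] x = f x) \<and>
        (\<forall>vs. \<forall>x\<in>S. (D vs has_derivative (\<lambda>h. D (h # vs) x)) (at x)))"

definition M_rho :: "('a::euclidean_space \<Rightarrow> real) \<Rightarrow> real" where
  "M_rho \<rho> = 1 / (LINT y : ball 0 1 | lebesgue. \<rho> y)"

definition C_n :: "('a::euclidean_space \<Rightarrow> real) \<Rightarrow> ('a \<Rightarrow> real) \<Rightarrow> nat \<Rightarrow> 'a \<Rightarrow> real" where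
  "C_n \<rho> \<eta> n x = M_rho \<rho> * real n ^ DIM('a) / \<eta> x ^ DIM('a)"

definition T_n :: "('a::euclidean_space \<Rightarrow> real) \<Rightarrow> 'a set \<Rightarrow> ('a \<Rightarrow> real) \<Rightarrow> nat
                    \<Rightarrow> ('a \<Rightarrow> real) \<Rightarrow> 'a \<Rightarrow> real" where
  "T_n \<rho> \<Omega> \<eta> n f x =
     C_n \<rho> \<eta> n x * (LINT y : \<Omega> | lebesgue. \<rho> ((real n / \<eta> x) *\<^sub>R (x - y)) * f y)"

end

theory Submission
  imports Defs
begin
lemma sigma_finite_lebesgue: "sigma_finite_measure (lebesgue :: 'a::euclidean_space measure)"
proof
  obtain A :: "'a set set" where A: "countable A" "A \<subseteq> sets lborel" "\<Union>A = space lborel" "\<forall>a\<in>A. emeasure lborel a \<noteq> \<infinity>"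
    using lborel.sigma_finite_countable by blast
  show "\<exists>A. countable A \<and> A \<subseteq> sets (lebesgue::'a measure) \<and> \<Union> A = space lebesgue \<and> (\<forall>a\<in>A. emeasure lebesgue a \<noteq> \<infinity>)"
    using A by (intro exI[of _ A]) (auto simp: emeasure_completion)
qed

interpretation leb: sigma_finite_measure "lebesgue :: 'a::euclidean_space measure"
  by (rule sigma_finite_lebesgue)

interpretation leb_pair: pair_sigma_finite "lebesgue :: 'a::euclidean_space measure" "lebesgue :: 'a measure"
  by (simp add: pair_sigma_finite_def sigma_finite_lebesgue)

locale S =
  fixes \<Omega> :: "'a::euclidean_space set" and \<rho> \<eta> :: "'a \<Rightarrow> real" and \<kappa> :: real
  assumes \<Omega>o: "open \<Omega>" and \<Omega>b: "bounded \<Omega>"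
   and \<rho>c: "continuous_on UNIV \<rho>"
   and \<rho>r: "\<And>x. 0 \<le> \<rho> x \<and> \<rho> x \<le> 1"
   and \<rho>z: "\<And>x. \<rho> x = 0 \<longleftrightarrow> norm x \<ge> 1"
   and \<eta>c: "continuous_on \<Omega> \<eta>"
   and \<kappa>: "0 < \<kappa>"
   and \<eta>b: "\<And>x. x\<in>\<Omega> \<Longrightarrow> \<kappa> * infdist x (frontier \<Omega>)^2 \<le> \<eta> x \<and> \<eta> x \<le> infdist x (frontier \<Omega>)^2"
begin

definition \<sigma> where "\<sigma> x = infdist x (frontier \<Omega>)"

lemma \<sigma>_pos: assumes "x \<in> \<Omega>" shows "\<sigma> x > 0"
proof -
  have "\<Omega> \<noteq> UNIV" using \<Omega>b not_bounded_UNIV by auto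
  then have "frontier \<Omega> \<noteq> {}" using assms frontier_eq_empty by auto
  moreover have "x \<notin> frontier \<Omega>" using assms \<Omega>o by (simp add: frontier_def interior_open)
  ultimately show ?thesis unfolding \<sigma>_def by (simp add: infdist_pos_not_in_closed)
qed

lemma ball_sub: assumes "x \<in> \<Omega>" shows "ball x (\<sigma> x) \<subseteq> \<Omega>"
proof (rule ccontr)
  assume "\<not> ?thesis"
  then have "ball x (\<sigma> x) - \<Omega> \<noteq> {}" by auto
  moreover have "ball x (\<sigma> x) \<inter> \<Omega> \<noteq> {}" using assms \<sigma>_pos[OF assms] by (metis IntI centre_in_ball empty_iff)
  ultimately obtain p where p: "p \<in> ball x (\<sigma> x)" "p \<in> frontier \<Omega>"
    using connected_Int_frontier[of "ball x (\<sigma> x)" \<Omega>] by auto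
  then have "\<sigma> x \<le> dist x p" unfolding \<sigma>_def by (simp add: infdist_le)
  with p show False by simp
qed

lemma \<sigma>_lip: "\<bar>\<sigma> x - \<sigma> y\<bar> \<le> dist x y"
  unfolding \<sigma>_def by (rule infdist_triangle_abs)

lemma \<sigma>_bdd: "\<exists>R>0. \<forall>x\<in>\<Omega>. \<sigma> x \<le> R"
proof (cases "\<Omega> = {}")
  case True then show ?thesis by (intro exI[of _ 1]) simp
next
  case False
  obtain R0 where R0': "R0 > 0" "\<And>x. x\<in>\<Omega> \<Longrightarrow> norm x \<le> R0" using \<Omega>b bounded_pos by metis
  have R0: "R0 > 0" "\<Omega> \<subseteq> cball 0 R0" using R0' by auto
  have "\<Omega> \<noteq> UNIV" using \<Omega>b not_bounded_UNIV by auto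
  then obtain p where p: "p \<in> frontier \<Omega>" using False frontier_eq_empty by blast
  have "closure \<Omega> \<subseteq> cball 0 R0" using R0 by (simp add: closure_minimal)
  moreover have "p \<in> closure \<Omega>" using p by (simp add: frontier_def)
  ultimately have pR: "norm p \<le> R0" by (meson mem_cball_0 subsetD)
  have "\<sigma> x \<le> 2 * R0" if "x \<in> \<Omega>" for x
  proof -
    have "\<sigma> x \<le> dist x p" unfolding \<sigma>_def using p by (simp add: infdist_le)
    also have "\<dots> \<le> norm x + norm p" using norm_triangle_ineq4[of x p] by (simp add: dist_norm)
    also have "norm x + norm p \<le> 2 * R0"
    proof -
      have "norm x \<le> R0" using that R0(2) by (meson mem_cball_0 subsetD)
      then show ?thesis using pR by linarith
    qed
    finally show ?thesis .
  qed
  moreover have "2 * R0 > 0" using R0 by simp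
  ultimately show ?thesis by blast
qed

definition R where "R = (SOME R. R > 0 \<and> (\<forall>x\<in>\<Omega>. \<sigma> x \<le> R))"

lemma R: "R > 0" "\<And>x. x \<in> \<Omega> \<Longrightarrow> \<sigma> x \<le> R"
  using someI_ex[OF \<sigma>_bdd] unfolding R_def by auto

definition n0 :: nat where "n0 = nat \<lceil>2 * R\<rceil> + 1"

lemma n0: "n \<ge> n0 \<Longrightarrow> real n \<ge> 2 * R + 1"
  unfolding n0_def by linarith

lemma n0_pos: "n \<ge> n0 \<Longrightarrow> real n > 0"
  using n0 R by force

lemma \<eta>_pos: "x \<in> \<Omega> \<Longrightarrow> \<eta> x > 0"
  using \<eta>b[of x] \<sigma>_pos[of x] \<kappa> unfolding \<sigma>_def
  by (smt (verit) mult_pos_pos zero_less_power)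

lemma \<eta>_le: "x \<in> \<Omega> \<Longrightarrow> \<eta> x \<le> \<sigma> x ^ 2"
  using \<eta>b unfolding \<sigma>_def by auto

lemma \<eta>_ge: "x \<in> \<Omega> \<Longrightarrow> \<kappa> * \<sigma> x ^ 2 \<le> \<eta> x"
  using \<eta>b unfolding \<sigma>_def by auto

lemma \<Omega>_leb[measurable]: "\<Omega> \<in> sets lebesgue"
  using \<Omega>o by simp

lemma \<Omega>_borel[measurable]: "\<Omega> \<in> sets borel"
  using \<Omega>o by simp

lemma \<Omega>_fin: "emeasure lebesgue \<Omega> < \<infinity>"
  using bounded_set_imp_lmeasurable[OF \<Omega>b \<Omega>_leb] by (simp add: fmeasurable_def)

definition \<eta>t where "\<eta>t x = (if x \<in> \<Omega> then \<eta> x else 1)"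

lemma \<eta>t_meas[measurable]: "\<eta>t \<in> borel_measurable borel"
  unfolding \<eta>t_def[abs_def]
  by (rule borel_measurable_continuous_on_if) (auto intro: \<eta>c continuous_on_const)

lemma \<rho>_meas[measurable]: "\<rho> \<in> borel_measurable borel"
  using \<rho>c by (rule borel_measurable_continuous_onI)

end

context S begin

definition J where "J = (\<integral>\<^sup>+y. ennreal (\<rho> y) \<partial>lborel)"

lemma \<rho>_nn: "0 \<le> \<rho> x" and \<rho>_le1: "\<rho> x \<le> 1" using \<rho>r by auto

lemma \<rho>_out: "norm x \<ge> 1 \<Longrightarrow> \<rho> x = 0" using \<rho>z by auto

lemma J_fin: "J < \<infinity>"
proof -
  have "J \<le> (\<integral>\<^sup>+y. indicator (cball (0::'a) 1) y \<partial>lborel)"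
    unfolding J_def
  proof (rule nn_integral_mono)
    fix y :: 'a
    show "ennreal (\<rho> y) \<le> indicator (cball 0 1) y"
    proof (cases "norm y \<le> 1")
      case True then show ?thesis using \<rho>_le1[of y] by (simp add: indicator_def)
    next
      case False then show ?thesis using \<rho>_out[of y] by simp
    qed
  qed
  also have "\<dots> = emeasure lborel (cball (0::'a) 1)" by simp
  also have "\<dots> < \<infinity>" by (rule emeasure_lborel_cball_finite)
  finally show ?thesis .
qed

lemma J_pos: "J > 0"
proof -
  have r0: "\<rho> 0 > 0" using \<rho>_nn[of 0] \<rho>z[of 0] by simp
  obtain r where r: "r > 0" "\<And>y. dist y 0 < r \<Longrightarrow> dist (\<rho> y) (\<rho> 0) < \<rho> 0 / 2"
    using \<rho>c r0 unfolding continuous_on_iff by (metis UNIV_I half_gt_zero)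
  have le: "(\<integral>\<^sup>+y. ennreal (\<rho> 0 / 2) * indicator (ball (0::'a) r) y \<partial>lborel) \<le> J"
    unfolding J_def
  proof (rule nn_integral_mono)
    fix y :: 'a
    show "ennreal (\<rho> 0 / 2) * indicator (ball 0 r) y \<le> ennreal (\<rho> y)"
    proof (cases "y \<in> ball 0 r")
      case True
      then have "dist (\<rho> y) (\<rho> 0) < \<rho> 0 / 2" using r(2)[of y] by simp
      then have "\<rho> 0 / 2 \<le> \<rho> y" unfolding dist_real_def by linarith
      then show ?thesis using True by (simp add: ennreal_leI)
    qed simp
  qed
  have eq: "(\<integral>\<^sup>+y. ennreal (\<rho> 0 / 2) * indicator (ball (0::'a) r) y \<partial>lborel) = ennreal (\<rho> 0 / 2) * emeasure lborel (ball (0::'a) r)"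
    by (simp add: nn_integral_cmult_indicator)
  have bp: "emeasure lborel (ball (0::'a) r) > 0"
  proof -
    have "emeasure lborel (ball (0::'a) r) = ennreal (measure lborel (ball (0::'a) r))"
      using emeasure_lborel_ball_finite[of "0::'a" r] by (simp add: emeasure_eq_ennreal_measure)
    then show ?thesis using content_ball_pos[OF r(1), of 0] by simp
  qed
  have "0 < ennreal (\<rho> 0 / 2) * emeasure lborel (ball (0::'a) r)"
    using bp r0 by (simp add: ennreal_zero_less_mult_iff)
  then show ?thesis using le eq by simp
qed

definition M where "M = M_rho \<rho>"

lemma \<rho>_int_eq: "(LINT y : ball 0 1 | lebesgue. \<rho> y) = enn2real J"
proof -
  have "(LINT y : ball 0 1 | lebesgue. \<rho> y) = integral\<^sup>L lebesgue \<rho>"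
    unfolding set_lebesgue_integral_def
  proof (rule Bochner_Integration.integral_cong[OF refl])
    fix y :: 'a
    show "indicator (ball 0 1) y *\<^sub>R \<rho> y = \<rho> y"
      using \<rho>_out[of y] by (cases "norm y < 1") (auto simp: indicator_def)
  qed
  also have "\<dots> = integral\<^sup>L lborel \<rho>" by (rule integral_completion) simp
  also have "\<dots> = enn2real J" unfolding J_def
    by (rule integral_eq_nn_integral) (auto simp: \<rho>_nn)
  finally show ?thesis .
qed

lemma M_eq: "M = 1 / enn2real J"
  unfolding M_def M_rho_def \<rho>_int_eq ..

lemma J_real_pos: "enn2real J > 0"
  using J_fin J_pos by (simp add: enn2real_positive_iff)

lemma M_pos: "M > 0" using M_eq J_real_pos by simp

lemma J_eq: "J = ennreal (1 / M)"
  using M_eq J_fin J_pos by (simp add: ennreal_enn2real_if)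

lemma scale: fixes a :: 'a assumes c: "c > 0"
  shows "(\<integral>\<^sup>+y. ennreal (\<rho> (c *\<^sub>R (a - y))) \<partial>lborel) = ennreal ((1/c)^DIM('a)) * J"
proof -
  let ?T = "\<lambda>x::'a. a + (-1/c) *\<^sub>R x"
  have eq: "lborel = density (distr lborel borel ?T) (\<lambda>_. ennreal (\<bar>-1/c\<bar>^DIM('a)))"
    using lborel_affine[of "-1/c" a] c by simp
  have "(\<integral>\<^sup>+y. ennreal (\<rho> (c *\<^sub>R (a - y))) \<partial>lborel)
      = (\<integral>\<^sup>+y. ennreal (\<rho> (c *\<^sub>R (a - y))) \<partial>density (distr lborel borel ?T) (\<lambda>_. ennreal (\<bar>-1/c\<bar>^DIM('a))))"
    using eq by (rule arg_cong)
  also have "\<dots> = (\<integral>\<^sup>+y. ennreal (\<bar>-1/c\<bar>^DIM('a)) * ennreal (\<rho> (c *\<^sub>R (a - y))) \<partial>distr lborel borel ?T)"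
    by (rule nn_integral_density) auto
  also have "\<dots> = (\<integral>\<^sup>+x. ennreal (\<bar>-1/c\<bar>^DIM('a)) * ennreal (\<rho> (c *\<^sub>R (a - ?T x))) \<partial>lborel)"
    by (rule nn_integral_distr) auto
  also have "\<dots> = (\<integral>\<^sup>+x. ennreal ((1/c)^DIM('a)) * ennreal (\<rho> x) \<partial>lborel)"
    using c by (simp add: algebra_simps)
  also have "\<dots> = ennreal ((1/c)^DIM('a)) * J"
    unfolding J_def by (rule nn_integral_cmult) simp
  finally show ?thesis .
qed

end

context S begin

definition kt where
  "kt n x y = M * real n ^ DIM('a) / \<eta>t x ^ DIM('a) * \<rho> ((real n / \<eta>t x) *\<^sub>R (x - y))"

definition Tt where "Tt n h x = (\<integral>y. indicator \<Omega> y * kt n x y * h y \<partial>lebesgue)"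

lemma \<eta>t_in: "x \<in> \<Omega> \<Longrightarrow> \<eta>t x = \<eta> x" unfolding \<eta>t_def by simp

lemma k_nn: "x \<in> \<Omega> \<Longrightarrow> 0 \<le> kt n x y"
  unfolding kt_def using \<eta>_pos[of x] M_pos \<rho>_nn by (simp add: \<eta>t_in)

lemma kt_eq: "x \<in> \<Omega> \<Longrightarrow> kt n x y = (M * real n ^ DIM('a) / \<eta> x ^ DIM('a)) * \<rho> ((real n / \<eta> x) *\<^sub>R (x - y))"
  unfolding kt_def by (simp add: \<eta>t_in)

lemma k_le: "x \<in> \<Omega> \<Longrightarrow> kt n x y \<le> M * real n ^ DIM('a) / \<eta> x ^ DIM('a)"
proof -
  assume x: "x \<in> \<Omega>"
  have "0 \<le> M * real n ^ DIM('a) / \<eta> x ^ DIM('a)" using M_pos \<eta>_pos[OF x] by simp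
  from mult_left_le[OF \<rho>_le1 this] show ?thesis using kt_eq[OF x] by simp
qed

lemma k_supp: assumes x: "x \<in> \<Omega>" and n: "real n > 0" and k: "kt n x y \<noteq> 0"
  shows "dist x y < \<eta> x / real n"
proof -
  have "\<rho> ((real n / \<eta> x) *\<^sub>R (x - y)) \<noteq> 0" using k x unfolding kt_def by (auto simp: \<eta>t_in)
  then have "norm ((real n / \<eta> x) *\<^sub>R (x - y)) < 1" using \<rho>z by (meson not_le)
  then have "real n / \<eta> x * dist x y < 1" using n \<eta>_pos[OF x] by (simp add: dist_norm)
  then show ?thesis using n \<eta>_pos[OF x] by (simp add: field_simps)
qed

lemma supp_in: assumes x: "x \<in> \<Omega>" and n: "n \<ge> n0" and d: "dist x y < \<eta> x / real n"
  shows "y \<in> \<Omega>" "dist x y < \<sigma> x ^ 2 / real n" "\<sigma> x ^ 2 / real n \<le> \<sigma> x / 2"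
proof -
  have np: "real n > 0" using n0_pos[OF n] .
  have s: "0 < \<sigma> x" "\<sigma> x \<le> R" using \<sigma>_pos[OF x] R(2)[OF x] by auto
  have "\<eta> x / real n \<le> \<sigma> x ^ 2 / real n" using \<eta>_le[OF x] np by (simp add: divide_right_mono)
  then show d2: "dist x y < \<sigma> x ^ 2 / real n" using d by linarith
  have "\<sigma> x * 2 \<le> real n" using s n0[OF n] by linarith
  then have "\<sigma> x * \<sigma> x * 2 \<le> \<sigma> x * real n" using s by (metis mult.assoc mult_le_cancel_left_pos)
  then show h: "\<sigma> x ^ 2 / real n \<le> \<sigma> x / 2" using np by (simp add: field_simps power2_eq_square)
  have "dist x y < \<sigma> x" using d2 h s by linarith
  then show "y \<in> \<Omega>" using ball_sub[OF x] by auto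
qed

lemma k_supp_in: "x \<in> \<Omega> \<Longrightarrow> n \<ge> n0 \<Longrightarrow> kt n x y \<noteq> 0 \<Longrightarrow> y \<in> \<Omega>"
  using k_supp supp_in(1) n0_pos by blast

lemma kt_borel: "(\<lambda>p. kt n (fst p) (snd p)) \<in> borel_measurable (lborel \<Otimes>\<^sub>M lborel)"
  unfolding kt_def by measurable

lemma id_pair: "(\<lambda>p. p) \<in> ((lebesgue :: 'a measure) \<Otimes>\<^sub>M (lebesgue :: 'a measure)) \<rightarrow>\<^sub>M ((lborel :: 'a measure) \<Otimes>\<^sub>M (lborel :: 'a measure))"
proof -
  have idl: "(\<lambda>x. x) \<in> (lebesgue :: 'a measure) \<rightarrow>\<^sub>M lborel"
    by (rule measurable_completion) simp
  have "fst \<in> ((lebesgue :: 'a measure) \<Otimes>\<^sub>M (lebesgue :: 'a measure)) \<rightarrow>\<^sub>M (lborel :: 'a measure)"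
    using measurable_comp[OF measurable_fst[of "lebesgue :: 'a measure" "lebesgue :: 'a measure"] idl] by (simp add: comp_def)
  moreover have "snd \<in> ((lebesgue :: 'a measure) \<Otimes>\<^sub>M (lebesgue :: 'a measure)) \<rightarrow>\<^sub>M (lborel :: 'a measure)"
    using measurable_comp[OF measurable_snd[of "lebesgue :: 'a measure" "lebesgue :: 'a measure"] idl] by (simp add: comp_def)
  ultimately show ?thesis unfolding measurable_pair_iff by (simp add: o_def)
qed

lemma kt_leb: "(\<lambda>p. kt n (fst p) (snd p)) \<in> borel_measurable (lebesgue \<Otimes>\<^sub>M lebesgue)"
  using measurable_comp[OF id_pair kt_borel[of n]] by (simp add: o_def)

lemma kt_meas_x: "(\<lambda>x. kt n x y) \<in> borel_measurable lebesgue"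
  unfolding kt_def by (intro measurable_completion) measurable

lemma kt_meas_y: "(\<lambda>y. kt n x y) \<in> borel_measurable lebesgue"
  unfolding kt_def by (intro measurable_completion) measurable

lemma k_meas:
  assumes h: "(\<lambda>y. indicator \<Omega> y * h y) \<in> borel_measurable lebesgue"
  shows "(\<lambda>(x,y). indicator \<Omega> y * kt n x y * h y) \<in> borel_measurable (lebesgue \<Otimes>\<^sub>M lebesgue)"
proof -
  have hm: "(\<lambda>p. indicator \<Omega> (snd p) * h (snd p)) \<in> borel_measurable (lebesgue \<Otimes>\<^sub>M (lebesgue::'a measure))"
    using measurable_comp[OF measurable_snd h] by (simp add: o_def)
  have "(\<lambda>p. kt n (fst p) (snd p) * (indicator \<Omega> (snd p) * h (snd p))) \<in> borel_measurable (lebesgue \<Otimes>\<^sub>M lebesgue)"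
    using borel_measurable_times[OF kt_leb[of n] hm] by simp
  then show ?thesis by (simp add: case_prod_beta' mult_ac)
qed

lemma Tt_meas:
  assumes h: "(\<lambda>y. indicator \<Omega> y * h y) \<in> borel_measurable lebesgue"
  shows "Tt n h \<in> borel_measurable lebesgue"
  unfolding Tt_def[abs_def]
  using leb.borel_measurable_lebesgue_integral[OF k_meas[OF h]] by simp

lemma T_eq: "x \<in> \<Omega> \<Longrightarrow> T_n \<rho> \<Omega> \<eta> n h x = Tt n h x"
  unfolding T_n_def C_n_def Tt_def set_lebesgue_integral_def kt_def M_def
  by (simp add: \<eta>t_in mult_ac flip: integral_mult_right_zero)

lemma k_int: assumes x: "x \<in> \<Omega>" and n: "n \<ge> n0"
  shows "(\<integral>\<^sup>+y. ennreal (indicator \<Omega> y * kt n x y) \<partial>lebesgue) = 1"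
proof -
  have np: "real n > 0" using n0_pos[OF n] .
  have ep: "\<eta> x > 0" using \<eta>_pos[OF x] .
  let ?C = "M * real n ^ DIM('a) / \<eta> x ^ DIM('a)"
  have C0: "?C \<ge> 0" using M_pos ep by simp
  have "(\<integral>\<^sup>+y. ennreal (indicator \<Omega> y * kt n x y) \<partial>lebesgue) = (\<integral>\<^sup>+y. ennreal (kt n x y) \<partial>lebesgue)"
  proof (rule nn_integral_cong)
    fix y show "ennreal (indicator \<Omega> y * kt n x y) = ennreal (kt n x y)"
      using k_supp_in[OF x n, of y] by (cases "kt n x y = 0") auto
  qed
  also have "\<dots> = (\<integral>\<^sup>+y. ennreal (kt n x y) \<partial>lborel)" by (rule nn_integral_completion)
  also have "\<dots> = (\<integral>\<^sup>+y. ennreal ?C * ennreal (\<rho> ((real n / \<eta> x) *\<^sub>R (x - y))) \<partial>lborel)"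
  proof (rule nn_integral_cong)
    fix y show "ennreal (kt n x y) = ennreal ?C * ennreal (\<rho> ((real n / \<eta> x) *\<^sub>R (x - y)))"
      by (simp only: kt_eq[OF x] ennreal_mult[OF C0 \<rho>_nn])
  qed
  also have "\<dots> = ennreal ?C * (\<integral>\<^sup>+y. ennreal (\<rho> ((real n / \<eta> x) *\<^sub>R (x - y))) \<partial>lborel)"
    by (rule nn_integral_cmult) simp
  also have "\<dots> = ennreal ?C * (ennreal ((1 / (real n / \<eta> x)) ^ DIM('a)) * J)"
    using np ep by (simp add: scale)
  also have "\<dots> = ennreal (?C * ((1 / (real n / \<eta> x)) ^ DIM('a) * (1 / M)))"
  proof -
    have b0: "0 \<le> (1 / (real n / \<eta> x)) ^ DIM('a)" using np ep by simp
    have c0: "0 \<le> 1 / M" using M_pos by simp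
    have bc0: "0 \<le> (1 / (real n / \<eta> x)) ^ DIM('a) * (1 / M)" using b0 c0 by simp
    show ?thesis unfolding J_eq
      by (simp only: ennreal_mult[OF b0 c0, symmetric] ennreal_mult[OF C0 bc0, symmetric])
  qed
  also have "?C * ((1 / (real n / \<eta> x)) ^ DIM('a) * (1 / M)) = 1"
    using np ep M_pos by (simp add: field_simps power_divide)
  finally show ?thesis by simp
qed

end

context S begin

lemma k_int_real: assumes x: "x \<in> \<Omega>" and n: "n \<ge> n0"
  shows "integrable lebesgue (\<lambda>y. indicator \<Omega> y * kt n x y)"
    "(\<integral>y. indicator \<Omega> y * kt n x y \<partial>lebesgue) = 1"
proof -
  have m: "(\<lambda>y. indicator \<Omega> y * kt n x y) \<in> borel_measurable lebesgue"
    using kt_meas_y by measurable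
  have nn: "AE y in lebesgue. 0 \<le> indicator \<Omega> y * kt n x y"
    using k_nn[OF x] by simp
  show "integrable lebesgue (\<lambda>y. indicator \<Omega> y * kt n x y)"
    by (rule integrableI_nonneg[OF m nn]) (simp add: k_int[OF x n])
  show "(\<integral>y. indicator \<Omega> y * kt n x y \<partial>lebesgue) = 1"
    by (subst integral_eq_nn_integral[OF m nn]) (simp add: k_int[OF x n])
qed

lemma int_prod: assumes x: "x \<in> \<Omega>" and h: "integrable lebesgue (\<lambda>y. indicator \<Omega> y * h y)"
  shows "integrable lebesgue (\<lambda>y. indicator \<Omega> y * kt n x y * h y)"
proof (rule Bochner_Integration.integrable_bound)
  let ?C = "M * real n ^ DIM('a) / \<eta> x ^ DIM('a)"
  show "integrable lebesgue (\<lambda>y. ?C * (indicator \<Omega> y * h y))" using h by simp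
  have hm: "(\<lambda>y. indicator \<Omega> y * h y) \<in> borel_measurable lebesgue" using h by auto
  have "(\<lambda>y. kt n x y * (indicator \<Omega> y * h y)) \<in> borel_measurable lebesgue"
    using borel_measurable_times[OF kt_meas_y hm] .
  then show "(\<lambda>y. indicator \<Omega> y * kt n x y * h y) \<in> borel_measurable lebesgue"
    by (simp add: mult_ac)
  show "AE y in lebesgue. norm (indicator \<Omega> y * kt n x y * h y) \<le> norm (?C * (indicator \<Omega> y * h y))"
  proof (rule AE_I2)
    fix y
    have k1: "kt n x y \<le> ?C" and k0: "0 \<le> kt n x y" using k_le[OF x] k_nn[OF x] by auto
    have C0: "0 \<le> ?C" using k0 k1 by linarith
    have e1: "norm (indicator \<Omega> y * kt n x y * h y) = kt n x y * \<bar>indicator \<Omega> y * h y\<bar>"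
      using k0 by (simp add: abs_mult)
    have e2: "norm (?C * (indicator \<Omega> y * h y)) = ?C * \<bar>indicator \<Omega> y * h y\<bar>"
      using C0 by (simp only: real_norm_def abs_mult abs_of_nonneg)
    have "kt n x y * \<bar>indicator \<Omega> y * h y\<bar> \<le> ?C * \<bar>indicator \<Omega> y * h y\<bar>"
      using k1 by (rule mult_right_mono) simp
    then show "norm (indicator \<Omega> y * kt n x y * h y) \<le> norm (?C * (indicator \<Omega> y * h y))"
      using e1 e2 by simp
  qed
qed

definition Vr where "Vr = measure lebesgue (ball (0::'a) 1)"

lemma V_eq: "emeasure lebesgue (ball (0::'a) 1) = ennreal Vr"
  unfolding Vr_def by (rule emeasure_eq_ennreal_measure[OF fmeasurableD2[OF lmeasurable_ball]])

lemma Vr_nn: "Vr \<ge> 0" unfolding Vr_def by simp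

definition Bc where "Bc = M * (16 / \<kappa>) ^ DIM('a) * Vr"

lemma Bc_nn: "Bc \<ge> 0" unfolding Bc_def using M_pos \<kappa> Vr_nn by simp

lemma k_col: assumes n: "n \<ge> n0"
  shows "(\<integral>\<^sup>+x. ennreal (indicator \<Omega> x * kt n x y) \<partial>lebesgue) \<le> ennreal Bc"
proof (cases "y \<in> \<Omega>")
  case False
  have "(\<integral>\<^sup>+x. ennreal (indicator \<Omega> x * kt n x y) \<partial>lebesgue) = (\<integral>\<^sup>+x. 0 \<partial>(lebesgue :: 'a measure))"
  proof (rule nn_integral_cong)
    fix x show "ennreal (indicator \<Omega> x * kt n x y) = 0"
      using k_supp_in[of x n y] n False by (cases "x \<in> \<Omega>"; cases "kt n x y = 0") auto
  qed
  then show ?thesis by simp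
next
  case y: True
  define s where "s = \<sigma> y"
  have s0: "s > 0" unfolding s_def using \<sigma>_pos[OF y] .
  have np: "real n > 0" using n0_pos[OF n] .
  define r where "r = 4 * s^2 / real n"
  define cst where "cst = M * real n ^ DIM('a) / (\<kappa> * s^2 / 4) ^ DIM('a)"
  have r0: "r \<ge> 0" unfolding r_def using np by simp
  have c0: "cst \<ge> 0" unfolding cst_def using M_pos \<kappa> by simp
  have pw: "ennreal (indicator \<Omega> x * kt n x y) \<le> ennreal cst * indicator (ball y r) x" for x
  proof (cases "x \<in> \<Omega> \<and> kt n x y \<noteq> 0")
    case False
    then show ?thesis by (auto simp: indicator_def)
  next
    case True
    then have x: "x \<in> \<Omega>" and k: "kt n x y \<noteq> 0" by auto
    have d: "dist x y < \<eta> x / real n" using k_supp[OF x np k] .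
    have d2: "dist x y < \<sigma> x ^ 2 / real n" and h: "\<sigma> x ^ 2 / real n \<le> \<sigma> x / 2"
      using supp_in[OF x n d] by auto
    have lip: "\<bar>\<sigma> x - s\<bar> \<le> dist x y" unfolding s_def by (rule \<sigma>_lip)
    have sx0: "\<sigma> x > 0" using \<sigma>_pos[OF x] .
    have up: "\<sigma> x \<le> 2 * s" using lip d2 h by linarith
    have lo: "s / 2 \<le> \<sigma> x" using lip d2 h by linarith
    have "\<sigma> x ^ 2 \<le> (2 * s) ^ 2" using up sx0 by (intro power_mono) auto
    then have "\<sigma> x ^ 2 / real n \<le> r" unfolding r_def using np by (simp add: divide_right_mono power_mult_distrib)
    then have inb: "x \<in> ball y r" using d2 by (simp add: dist_commute)
    have sq: "(s / 2) ^ 2 \<le> \<sigma> x ^ 2" using lo s0 by (intro power_mono) auto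
    have "\<kappa> * s^2 / 4 = \<kappa> * (s / 2) ^ 2" by (simp add: power_divide)
    also have "\<dots> \<le> \<kappa> * \<sigma> x ^ 2" using mult_left_mono[OF sq] \<kappa> by simp
    also have "\<dots> \<le> \<eta> x" using \<eta>_ge[OF x] .
    finally have "\<kappa> * s^2 / 4 \<le> \<eta> x" .
    then have "(\<kappa> * s^2 / 4) ^ DIM('a) \<le> \<eta> x ^ DIM('a)" using \<kappa> s0 by (intro power_mono) auto
    moreover have "(\<kappa> * s^2 / 4) ^ DIM('a) > 0" using \<kappa> s0 by simp
    ultimately have "M * real n ^ DIM('a) / \<eta> x ^ DIM('a) \<le> cst" unfolding cst_def
      using M_pos np by (intro divide_left_mono) auto
    then have "indicator \<Omega> x * kt n x y \<le> cst" using k_le[OF x, of n y] x by simp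
    then show ?thesis using inb by (simp add: ennreal_leI)
  qed
  have "(\<integral>\<^sup>+x. ennreal (indicator \<Omega> x * kt n x y) \<partial>lebesgue) \<le> (\<integral>\<^sup>+x. ennreal cst * indicator (ball y r) x \<partial>lebesgue)"
    by (rule nn_integral_mono) (rule pw)
  also have "\<dots> = ennreal cst * emeasure lebesgue (ball y r)"
    by (simp add: nn_integral_cmult_indicator)
  also have "\<dots> = ennreal cst * (ennreal (r ^ DIM('a)) * ennreal Vr)"
    using emeasure_lebesgue_ball_conv_unit_ball[OF r0, of y] V_eq by simp
  also have "\<dots> = ennreal (cst * r ^ DIM('a) * Vr)"
    using c0 r0 Vr_nn by (simp add: ennreal_mult mult.assoc)
  also have "cst * r ^ DIM('a) = M * (16 / \<kappa>) ^ DIM('a)"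
  proof -
    have "real n * r / (\<kappa> * s^2 / 4) = 16 / \<kappa>" unfolding r_def using np s0 \<kappa> by (simp add: field_simps power2_eq_square)
    moreover have "cst * r ^ DIM('a) = M * (real n * r / (\<kappa> * s^2 / 4)) ^ DIM('a)"
      unfolding cst_def by (simp add: power_divide power_mult_distrib)
    ultimately show ?thesis by simp
  qed
  finally show ?thesis unfolding Bc_def .
qed

end

context S begin

lemma ik_nn: "0 \<le> indicator \<Omega> x * kt n x y"
  using k_nn[of x n y] by (cases "x \<in> \<Omega>") auto

lemma opA:
  assumes hm: "(\<lambda>y. indicator \<Omega> y * h y) \<in> borel_measurable lebesgue" and n: "n \<ge> n0"
  shows "(\<integral>\<^sup>+x. ennreal (indicator \<Omega> x * \<bar>Tt n h x\<bar>) \<partial>lebesgue)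
     \<le> ennreal Bc * (\<integral>\<^sup>+y. ennreal (indicator \<Omega> y * \<bar>h y\<bar>) \<partial>lebesgue)"
proof -
  define G where "G x y = ennreal (indicator \<Omega> x * kt n x y * (indicator \<Omega> y * \<bar>h y\<bar>))" for x y
  have ha: "(\<lambda>y. indicator \<Omega> y * \<bar>h y\<bar>) \<in> borel_measurable lebesgue"
  proof -
    have "(\<lambda>y. \<bar>indicator \<Omega> y * h y\<bar>) \<in> borel_measurable lebesgue" using hm by measurable
    then show ?thesis by (simp add: abs_mult)
  qed
  have Gs: "G x y = ennreal (indicator \<Omega> x * kt n x y) * ennreal (indicator \<Omega> y * \<bar>h y\<bar>)" for x y
    unfolding G_def using ik_nn[of x n y] by (simp add: ennreal_mult)
  have step1: "ennreal (indicator \<Omega> x * \<bar>Tt n h x\<bar>) \<le> (\<integral>\<^sup>+y. G x y \<partial>lebesgue)" for x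
  proof (cases "x \<in> \<Omega>")
    case False then show ?thesis by simp
  next
    case x: True
    let ?F = "\<lambda>y. indicator \<Omega> y * kt n x y * h y"
    have eqn: "ennreal (norm (?F y)) = G x y" for y
      unfolding G_def using k_nn[OF x, of n y] x by (simp add: abs_mult)
    show ?thesis
    proof (cases "integrable lebesgue ?F")
      case True
      have "ennreal (indicator \<Omega> x * \<bar>Tt n h x\<bar>) = ennreal (norm (integral\<^sup>L lebesgue ?F))"
        using x unfolding Tt_def by simp
      also have "\<dots> \<le> (\<integral>\<^sup>+y. ennreal (norm (?F y)) \<partial>lebesgue)"
        by (rule integral_norm_bound_ennreal[OF True])
      also have "\<dots> = (\<integral>\<^sup>+y. G x y \<partial>lebesgue)" by (rule nn_integral_cong) (rule eqn)
      finally show ?thesis .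
    next
      case False
      then have "Tt n h x = 0" unfolding Tt_def by (simp add: not_integrable_integral_eq)
      then show ?thesis by simp
    qed
  qed
  have Gm: "case_prod G \<in> borel_measurable (lebesgue \<Otimes>\<^sub>M lebesgue)"
  proof -
    have a: "(\<lambda>p. indicator \<Omega> (fst p) * kt n (fst p) (snd p)) \<in> borel_measurable (lebesgue \<Otimes>\<^sub>M (lebesgue::'a measure))"
    proof -
      have "(\<lambda>p. indicator \<Omega> (fst p) :: real) \<in> borel_measurable (lebesgue \<Otimes>\<^sub>M (lebesgue::'a measure))"
        by measurable
      from borel_measurable_times[OF this kt_leb[of n]] show ?thesis .
    qed
    have b: "(\<lambda>p. indicator \<Omega> (snd p) * \<bar>h (snd p)\<bar>) \<in> borel_measurable (lebesgue \<Otimes>\<^sub>M (lebesgue::'a measure))"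
      using measurable_comp[OF measurable_snd ha] by (simp add: comp_def)
    have "(\<lambda>p. indicator \<Omega> (fst p) * kt n (fst p) (snd p) * (indicator \<Omega> (snd p) * \<bar>h (snd p)\<bar>)) \<in> borel_measurable (lebesgue \<Otimes>\<^sub>M (lebesgue::'a measure))"
      using borel_measurable_times[OF a b] .
    then have "(\<lambda>p. ennreal (indicator \<Omega> (fst p) * kt n (fst p) (snd p) * (indicator \<Omega> (snd p) * \<bar>h (snd p)\<bar>))) \<in> borel_measurable (lebesgue \<Otimes>\<^sub>M (lebesgue::'a measure))"
      by measurable
    then show ?thesis unfolding G_def by (simp add: case_prod_beta')
  qed
  have step3: "(\<integral>\<^sup>+x. G x y \<partial>lebesgue) \<le> ennreal (indicator \<Omega> y * \<bar>h y\<bar>) * ennreal Bc" for y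
  proof -
    have mx: "(\<lambda>x. ennreal (indicator \<Omega> x * kt n x y)) \<in> borel_measurable lebesgue"
      using kt_meas_x by measurable
    have "(\<integral>\<^sup>+x. G x y \<partial>lebesgue) = (\<integral>\<^sup>+x. ennreal (indicator \<Omega> x * kt n x y) \<partial>lebesgue) * ennreal (indicator \<Omega> y * \<bar>h y\<bar>)"
      unfolding Gs by (rule nn_integral_multc[OF mx])
    also have "\<dots> \<le> ennreal Bc * ennreal (indicator \<Omega> y * \<bar>h y\<bar>)"
      by (rule mult_right_mono[OF k_col[OF n]]) simp
    finally show ?thesis by (simp add: mult.commute)
  qed
  have "(\<integral>\<^sup>+x. ennreal (indicator \<Omega> x * \<bar>Tt n h x\<bar>) \<partial>lebesgue) \<le> (\<integral>\<^sup>+x. (\<integral>\<^sup>+y. G x y \<partial>lebesgue) \<partial>lebesgue)"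
    by (rule nn_integral_mono) (rule step1)
  also have "\<dots> = (\<integral>\<^sup>+y. (\<integral>\<^sup>+x. G x y \<partial>lebesgue) \<partial>lebesgue)"
    by (rule leb_pair.Fubini'[OF Gm, symmetric])
  also have "\<dots> \<le> (\<integral>\<^sup>+y. ennreal (indicator \<Omega> y * \<bar>h y\<bar>) * ennreal Bc \<partial>lebesgue)"
    by (rule nn_integral_mono) (rule step3)
  also have "\<dots> = (\<integral>\<^sup>+y. ennreal (indicator \<Omega> y * \<bar>h y\<bar>) \<partial>lebesgue) * ennreal Bc"
    by (rule nn_integral_multc) (use ha in measurable)
  finally show ?thesis by (simp add: mult.commute)
qed

lemma g_bdd: fixes g :: "'a \<Rightarrow> real" assumes g: "continuous_on UNIV g" shows "\<exists>B\<ge>0. \<forall>x\<in>closure \<Omega>. \<bar>g x\<bar> \<le> B"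
proof -
  have "compact (closure \<Omega>)" using \<Omega>b by (simp add: compact_closure)
  then have "compact (g ` closure \<Omega>)" using g by (meson compact_continuous_image continuous_on_subset subset_UNIV)
  then obtain B where "B > 0" "\<forall>v\<in>g ` closure \<Omega>. norm v \<le> B" using compact_imp_bounded bounded_pos by metis
  then show ?thesis by (intro exI[of _ B]) auto
qed

lemma g_int: fixes g :: "'a \<Rightarrow> real" assumes g: "continuous_on UNIV g" shows "integrable lebesgue (\<lambda>y. indicator \<Omega> y * g y)"
proof -
  obtain B where B: "B \<ge> 0" "\<And>x. x \<in> closure \<Omega> \<Longrightarrow> \<bar>g x\<bar> \<le> B" using g_bdd[OF g] by blast
  have gm: "g \<in> borel_measurable lebesgue"
    using borel_measurable_continuous_onI[OF g] by (intro measurable_completion) simp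
  show ?thesis
  proof (rule Bochner_Integration.integrable_bound)
    show "integrable lebesgue (\<lambda>y. B * indicator \<Omega> y)" using \<Omega>_fin by simp
    show "(\<lambda>y. indicator \<Omega> y * g y) \<in> borel_measurable lebesgue" using gm by measurable
    show "AE y in lebesgue. norm (indicator \<Omega> y * g y) \<le> norm (B * indicator \<Omega> y)"
    proof (rule AE_I2)
      fix y show "norm (indicator \<Omega> y * g y) \<le> norm (B * indicator \<Omega> y)"
        using B closure_subset[of \<Omega>] by (cases "y \<in> \<Omega>") auto
    qed
  qed
qed

lemma unif: fixes g :: "'a \<Rightarrow> real" assumes g: "continuous_on UNIV g" and e: "e > 0"
  shows "\<exists>n1. \<forall>n\<ge>n1. \<forall>x\<in>\<Omega>. \<bar>Tt n g x - g x\<bar> \<le> e"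
proof -
  have "compact (closure \<Omega>)" using \<Omega>b by (simp add: compact_closure)
  then have "uniformly_continuous_on (closure \<Omega>) g"
    using g by (meson compact_uniformly_continuous continuous_on_subset subset_UNIV)
  then obtain d where d: "d > 0" "\<And>x x'. x \<in> closure \<Omega> \<Longrightarrow> x' \<in> closure \<Omega> \<Longrightarrow> dist x' x < d \<Longrightarrow> dist (g x') (g x) < e"
    unfolding uniformly_continuous_on_def using e by metis
  define n1 where "n1 = max n0 (nat \<lceil>R^2 / d\<rceil> + 1)"
  have "\<bar>Tt n g x - g x\<bar> \<le> e" if n: "n \<ge> n1" and x: "x \<in> \<Omega>" for n x
  proof -
    have nn0: "n \<ge> n0" using n unfolding n1_def by simp
    have np: "real n > 0" using n0_pos[OF nn0] .
    have "real n \<ge> R^2 / d + 1" using n unfolding n1_def by linarith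
    then have "R^2 / real n < d" using np d R(1) by (simp add: field_simps)
    have small: "R^2 / real n < d"
    proof -
      have "R^2 / d < real n" using \<open>real n \<ge> R^2 / d + 1\<close> by linarith
      then show ?thesis using d np by (simp add: field_simps)
    qed
    let ?K = "\<lambda>y. indicator \<Omega> y * kt n x y"
    have Ki: "integrable lebesgue ?K" and K1: "(\<integral>y. ?K y \<partial>lebesgue) = 1"
      using k_int_real[OF x nn0] by auto
    have Fi: "integrable lebesgue (\<lambda>y. indicator \<Omega> y * kt n x y * g y)"
      using int_prod[OF x g_int[OF g]] .
    have "Tt n g x - g x = (\<integral>y. indicator \<Omega> y * kt n x y * g y \<partial>lebesgue) - (\<integral>y. g x * ?K y \<partial>lebesgue)"
      unfolding Tt_def using K1 by simp
    also have "\<dots> = (\<integral>y. indicator \<Omega> y * kt n x y * g y - g x * ?K y \<partial>lebesgue)"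
      by (rule Bochner_Integration.integral_diff[symmetric]) (use Fi Ki in auto)
    finally have eq: "Tt n g x - g x = (\<integral>y. ?K y * (g y - g x) \<partial>lebesgue)"
      by (simp add: algebra_simps)
    have Di: "integrable lebesgue (\<lambda>y. ?K y * (g y - g x))"
    proof -
      have "integrable lebesgue (\<lambda>y. indicator \<Omega> y * kt n x y * g y - g x * ?K y)"
        using Fi Ki by auto
      then show ?thesis by (simp add: algebra_simps)
    qed
    have pw: "ennreal (norm (?K y * (g y - g x))) \<le> ennreal e * ennreal (?K y)" for y
    proof (cases "?K y = 0")
      case True
      then have "norm (?K y * (g y - g x)) = 0" by (simp only: mult_zero_left norm_zero)
      then show ?thesis by (simp only: ennreal_0 zero_le)
    next
      case False
      then have y: "y \<in> \<Omega>" and k: "kt n x y \<noteq> 0" by (auto simp: indicator_def split: if_splits)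
      have dd: "dist x y < \<sigma> x ^ 2 / real n" using supp_in(2)[OF x nn0 k_supp[OF x np k]] .
      have "\<sigma> x ^ 2 \<le> R ^ 2" using \<sigma>_pos[OF x] R(2)[OF x] by (intro power_mono) auto
      then have "\<sigma> x ^ 2 / real n \<le> R^2 / real n" using np by (simp add: divide_right_mono)
      then have "dist y x < d" using dd small by (simp add: dist_commute)
      then have "dist (g y) (g x) < e" using d(2)[of x y] x y closure_subset by auto
      then have "\<bar>g y - g x\<bar> \<le> e" by (simp add: dist_real_def)
      then have "\<bar>?K y\<bar> * \<bar>g y - g x\<bar> \<le> \<bar>?K y\<bar> * e" by (intro mult_left_mono) auto
      then have "norm (?K y * (g y - g x)) \<le> e * ?K y" using k_nn[OF x, of n y]
        by (simp add: abs_mult mult.commute)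
      then show ?thesis using e k_nn[OF x, of n y] by (simp add: ennreal_mult[symmetric] ennreal_leI)
    qed
    have Km: "(\<lambda>y. ennreal (?K y)) \<in> borel_measurable lebesgue" using kt_meas_y by measurable
    have "ennreal \<bar>Tt n g x - g x\<bar> = ennreal (norm (\<integral>y. ?K y * (g y - g x) \<partial>lebesgue))" using eq by simp
    also have "\<dots> \<le> (\<integral>\<^sup>+y. ennreal (norm (?K y * (g y - g x))) \<partial>lebesgue)"
      by (rule integral_norm_bound_ennreal[OF Di])
    also have "\<dots> \<le> (\<integral>\<^sup>+y. ennreal e * ennreal (?K y) \<partial>lebesgue)"
      by (rule nn_integral_mono) (rule pw)
    also have "\<dots> = ennreal e * (\<integral>\<^sup>+y. ennreal (?K y) \<partial>lebesgue)"
      by (rule nn_integral_cmult[OF Km])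
    also have "\<dots> = ennreal e" using k_int[OF x nn0] by simp
    finally show ?thesis using e by (simp add: ennreal_le_iff)
  qed
  then show ?thesis by blast
qed

end

context S begin

definition approx :: "('a \<Rightarrow> real) \<Rightarrow> bool" where
  "approx f \<longleftrightarrow> (\<forall>\<epsilon>>0. \<exists>g. continuous_on UNIV g \<and>
      (\<integral>\<^sup>+y. ennreal (indicator \<Omega> y * \<bar>f y - g y\<bar>) \<partial>lebesgue) \<le> ennreal \<epsilon>)"

lemma fm: fixes f :: "'a \<Rightarrow> real" shows "integrable (lebesgue_on \<Omega>) f \<Longrightarrow> (\<lambda>y. indicator \<Omega> y * f y) \<in> borel_measurable lebesgue"
  using integrable_restrict_space[of \<Omega> lebesgue f] by auto

lemma gm: "continuous_on UNIV (g :: 'a \<Rightarrow> real) \<Longrightarrow> g \<in> borel_measurable lebesgue"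
  using borel_measurable_continuous_onI by (intro measurable_completion) simp

lemma ind_abs: fixes f g :: "'a \<Rightarrow> real" shows "indicator \<Omega> y * \<bar>f y - g y\<bar> = \<bar>indicator \<Omega> y * f y - indicator \<Omega> y * g y\<bar>"
  by (cases "y \<in> \<Omega>") auto

lemma dm':
  fixes f g :: "'a \<Rightarrow> real"
  assumes "(\<lambda>y. indicator \<Omega> y * f y) \<in> borel_measurable lebesgue" "(\<lambda>y. indicator \<Omega> y * g y) \<in> borel_measurable lebesgue"
  shows "(\<lambda>y. indicator \<Omega> y * \<bar>f y - g y\<bar>) \<in> borel_measurable lebesgue"
  unfolding ind_abs using assms by measurable

lemma dm:
  fixes f g :: "'a \<Rightarrow> real"
  assumes "(\<lambda>y. indicator \<Omega> y * f y) \<in> borel_measurable lebesgue" "(\<lambda>y. indicator \<Omega> y * g y) \<in> borel_measurable lebesgue"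
  shows "(\<lambda>y. ennreal (indicator \<Omega> y * \<bar>f y - g y\<bar>)) \<in> borel_measurable lebesgue"
  unfolding ind_abs using assms by measurable

lemma gm': "continuous_on UNIV (g :: 'a \<Rightarrow> real) \<Longrightarrow> (\<lambda>y. indicator \<Omega> y * g y) \<in> borel_measurable lebesgue"
  using gm[of g] by measurable

lemma tri:
  fixes f g h :: "'a \<Rightarrow> real"
  assumes m1: "(\<lambda>y. indicator \<Omega> y * f y) \<in> borel_measurable lebesgue"
    and m2: "(\<lambda>y. indicator \<Omega> y * h y) \<in> borel_measurable lebesgue"
    and m3: "(\<lambda>y. indicator \<Omega> y * g y) \<in> borel_measurable lebesgue"
  shows "(\<integral>\<^sup>+y. ennreal (indicator \<Omega> y * \<bar>f y - g y\<bar>) \<partial>lebesgue)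
     \<le> (\<integral>\<^sup>+y. ennreal (indicator \<Omega> y * \<bar>f y - h y\<bar>) \<partial>lebesgue) + (\<integral>\<^sup>+y. ennreal (indicator \<Omega> y * \<bar>h y - g y\<bar>) \<partial>lebesgue)"
proof -
  have "(\<integral>\<^sup>+y. ennreal (indicator \<Omega> y * \<bar>f y - g y\<bar>) \<partial>lebesgue)
     \<le> (\<integral>\<^sup>+y. ennreal (indicator \<Omega> y * \<bar>f y - h y\<bar>) + ennreal (indicator \<Omega> y * \<bar>h y - g y\<bar>) \<partial>lebesgue)"
  proof (rule nn_integral_mono)
    fix y
    have "indicator \<Omega> y * \<bar>f y - g y\<bar> \<le> indicator \<Omega> y * \<bar>f y - h y\<bar> + indicator \<Omega> y * \<bar>h y - g y\<bar>"
      by (cases "y \<in> \<Omega>") auto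
    then show "ennreal (indicator \<Omega> y * \<bar>f y - g y\<bar>) \<le> ennreal (indicator \<Omega> y * \<bar>f y - h y\<bar>) + ennreal (indicator \<Omega> y * \<bar>h y - g y\<bar>)"
      by (simp add: ennreal_plus[symmetric] ennreal_leI del: ennreal_plus)
  qed
  also have "\<dots> = (\<integral>\<^sup>+y. ennreal (indicator \<Omega> y * \<bar>f y - h y\<bar>) \<partial>lebesgue) + (\<integral>\<^sup>+y. ennreal (indicator \<Omega> y * \<bar>h y - g y\<bar>) \<partial>lebesgue)"
    by (rule nn_integral_add) (auto intro: dm' m1 m2 m3)
  finally show ?thesis .
qed

lemma approx_base:
  assumes A: "A \<in> sets (lebesgue_on \<Omega>)" shows "approx (\<lambda>x. indicator A x *\<^sub>R c)"
  unfolding approx_def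
proof (intro allI impI)
  fix \<epsilon> :: real assume \<epsilon>: "\<epsilon> > 0"
  have AL: "A \<in> sets lebesgue" and AO: "A \<subseteq> \<Omega>" using A sets_restrict_space_iff[of \<Omega> lebesgue A] by auto
  define e where "e = \<epsilon> / (2 * (\<bar>c\<bar> + 1))"
  have e0: "e > 0" unfolding e_def using \<epsilon> by (simp add: add_pos_nonneg)
  obtain C where C: "closed C" "C \<subseteq> A" "emeasure lebesgue (A - C) < ennreal e"
    using sets_lebesgue_inner_closed[OF AL e0] by metis
  obtain U where U: "open U" "A \<subseteq> U" "emeasure lebesgue (U - A) < ennreal e"
    using sets_lebesgue_outer_open[OF AL e0] by metis
  have "closed (- U)" using U(1) by auto
  moreover have "C \<inter> - U = {}" using C(2) U(2) by auto
  ultimately obtain \<phi> :: "'a \<Rightarrow> real" where \<phi>: "continuous_on UNIV \<phi>" "\<And>x. \<phi> x \<in> closed_segment 1 0"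
      "\<And>x. x \<in> C \<Longrightarrow> \<phi> x = 1" "\<And>x. x \<in> - U \<Longrightarrow> \<phi> x = 0"
    using Urysohn[OF C(1), of "-U" 1 0] by metis
  have \<phi>01: "0 \<le> \<phi> x \<and> \<phi> x \<le> 1" for x using \<phi>(2)[of x] by (simp add: closed_segment_eq_real_ivl)
  define g where "g x = c * \<phi> x" for x
  have gc: "continuous_on UNIV g" unfolding g_def[abs_def] using \<phi>(1) by (intro continuous_intros)
  have UC: "U - C \<in> sets lebesgue" using U(1) C(1) by (simp add: sets.Diff)
  have pw: "ennreal (indicator \<Omega> y * \<bar>indicator A y *\<^sub>R c - g y\<bar>) \<le> ennreal \<bar>c\<bar> * indicator (U - C) y" for y
  proof -
    have "\<bar>indicator A y *\<^sub>R c - g y\<bar> = \<bar>c\<bar> * \<bar>indicator A y - \<phi> y\<bar>"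
      unfolding g_def by (simp add: abs_mult[symmetric] algebra_simps)
    also have "\<dots> \<le> \<bar>c\<bar> * indicator (U - C) y"
    proof (rule mult_left_mono)
      show "\<bar>indicator A y - \<phi> y\<bar> \<le> indicator (U - C) y"
      proof (cases "y \<in> C")
        case True then show ?thesis using \<phi>(3) C(2) by auto
      next
        case nC: False
        show ?thesis
        proof (cases "y \<in> U")
          case False then show ?thesis using \<phi>(4)[of y] U(2) by (auto simp: indicator_def)
        next
          case True then show ?thesis using nC \<phi>01[of y] by (auto simp: indicator_def)
        qed
      qed
    qed simp
    finally have *: "\<bar>indicator A y *\<^sub>R c - g y\<bar> \<le> \<bar>c\<bar> * indicator (U - C) y" .
    have "indicator \<Omega> y * \<bar>indicator A y *\<^sub>R c - g y\<bar> \<le> 1 * \<bar>indicator A y *\<^sub>R c - g y\<bar>"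
      by (rule mult_right_mono) (auto simp: indicator_def)
    then have **: "indicator \<Omega> y * \<bar>indicator A y *\<^sub>R c - g y\<bar> \<le> \<bar>c\<bar> * indicator (U - C) y"
      using order_trans[OF _ *] by simp
    have e: "ennreal \<bar>c\<bar> * indicator (U - C) y = ennreal (\<bar>c\<bar> * indicator (U - C) y)"
      by (cases "y \<in> U - C") auto
    show ?thesis unfolding e by (rule ennreal_leI) (rule **)
  qed
  have "(\<integral>\<^sup>+y. ennreal (indicator \<Omega> y * \<bar>indicator A y *\<^sub>R c - g y\<bar>) \<partial>lebesgue) \<le> (\<integral>\<^sup>+y. ennreal \<bar>c\<bar> * indicator (U - C) y \<partial>lebesgue)"
    by (rule nn_integral_mono) (rule pw)
  also have "\<dots> = ennreal \<bar>c\<bar> * emeasure lebesgue (U - C)"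
    using UC by (simp add: nn_integral_cmult_indicator)
  also have "\<dots> \<le> ennreal \<bar>c\<bar> * ennreal (2 * e)"
  proof (rule mult_left_mono)
    have UL: "U \<in> sets lebesgue" using U(1) by simp
    have CL: "C \<in> sets lebesgue" using C(1) by (simp add: borel_closed)
    have "U - C \<subseteq> (U - A) \<union> (A - C)" by auto
    then have "emeasure lebesgue (U - C) \<le> emeasure lebesgue ((U - A) \<union> (A - C))"
      by (intro emeasure_mono sets.Un sets.Diff UL AL CL)
    also have "\<dots> \<le> emeasure lebesgue (U - A) + emeasure lebesgue (A - C)"
      by (intro emeasure_subadditive sets.Diff UL AL CL)
    also have "\<dots> \<le> ennreal e + ennreal e" using U(3) C(3) by (intro add_mono) auto
    also have "\<dots> = ennreal (2 * e)" using e0 by (simp add: ennreal_plus[symmetric] del: ennreal_plus)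
    finally show "emeasure lebesgue (U - C) \<le> ennreal (2 * e)" .
  qed simp
  also have "\<dots> = ennreal (\<bar>c\<bar> * (2 * e))" using e0 by (simp add: ennreal_mult)
  also have "\<dots> \<le> ennreal \<epsilon>"
  proof (rule ennreal_leI)
    have cp: "\<bar>c\<bar> + 1 > 0" by simp
    have eq: "\<bar>c\<bar> * (2 * e) = \<epsilon> * (\<bar>c\<bar> / (\<bar>c\<bar> + 1))" unfolding e_def using cp
      by (simp add: divide_simps)
    have le1: "\<bar>c\<bar> / (\<bar>c\<bar> + 1) \<le> 1" using cp by (simp add: divide_le_eq_1)
    have "\<epsilon> * (\<bar>c\<bar> / (\<bar>c\<bar> + 1)) \<le> \<epsilon> * 1" using \<epsilon> le1 by (intro mult_left_mono) auto
    then show "\<bar>c\<bar> * (2 * e) \<le> \<epsilon>" using eq by simp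
  qed
  finally show "\<exists>g. continuous_on UNIV g \<and> (\<integral>\<^sup>+y. ennreal (indicator \<Omega> y * \<bar>indicator A y *\<^sub>R c - g y\<bar>) \<partial>lebesgue) \<le> ennreal \<epsilon>"
    using gc by blast
qed

lemma approx_add:
  fixes f h :: "'a \<Rightarrow> real"
  assumes f: "integrable (lebesgue_on \<Omega>) f" and h: "integrable (lebesgue_on \<Omega>) h"
    and af: "approx f" and ah: "approx h"
  shows "approx (\<lambda>x. f x + h x)"
  unfolding approx_def
proof (intro allI impI)
  fix \<epsilon> :: real assume \<epsilon>: "\<epsilon> > 0"
  obtain g1 where g1: "continuous_on UNIV g1" "(\<integral>\<^sup>+y. ennreal (indicator \<Omega> y * \<bar>f y - g1 y\<bar>) \<partial>lebesgue) \<le> ennreal (\<epsilon>/2)"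
    using af \<epsilon> unfolding approx_def by (meson half_gt_zero)
  obtain g2 where g2: "continuous_on UNIV g2" "(\<integral>\<^sup>+y. ennreal (indicator \<Omega> y * \<bar>h y - g2 y\<bar>) \<partial>lebesgue) \<le> ennreal (\<epsilon>/2)"
    using ah \<epsilon> unfolding approx_def by (meson half_gt_zero)
  have gc: "continuous_on UNIV (\<lambda>x. g1 x + g2 x)" using g1(1) g2(1) by (intro continuous_intros)
  have "(\<integral>\<^sup>+y. ennreal (indicator \<Omega> y * \<bar>(f y + h y) - (g1 y + g2 y)\<bar>) \<partial>lebesgue)
     \<le> (\<integral>\<^sup>+y. ennreal (indicator \<Omega> y * \<bar>f y - g1 y\<bar>) + ennreal (indicator \<Omega> y * \<bar>h y - g2 y\<bar>) \<partial>lebesgue)"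
  proof (rule nn_integral_mono)
    fix y
    have "indicator \<Omega> y * \<bar>(f y + h y) - (g1 y + g2 y)\<bar> \<le> indicator \<Omega> y * \<bar>f y - g1 y\<bar> + indicator \<Omega> y * \<bar>h y - g2 y\<bar>"
      by (cases "y \<in> \<Omega>") auto
    then show "ennreal (indicator \<Omega> y * \<bar>(f y + h y) - (g1 y + g2 y)\<bar>) \<le> ennreal (indicator \<Omega> y * \<bar>f y - g1 y\<bar>) + ennreal (indicator \<Omega> y * \<bar>h y - g2 y\<bar>)"
      by (simp add: ennreal_plus[symmetric] ennreal_leI del: ennreal_plus)
  qed
  also have "\<dots> = (\<integral>\<^sup>+y. ennreal (indicator \<Omega> y * \<bar>f y - g1 y\<bar>) \<partial>lebesgue) + (\<integral>\<^sup>+y. ennreal (indicator \<Omega> y * \<bar>h y - g2 y\<bar>) \<partial>lebesgue)"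
    by (rule nn_integral_add) (auto intro: dm' fm f h gm' g1(1) g2(1))
  also have "\<dots> \<le> ennreal (\<epsilon>/2) + ennreal (\<epsilon>/2)" using g1(2) g2(2) by (rule add_mono)
  also have "\<dots> = ennreal \<epsilon>" using \<epsilon> by (simp add: ennreal_plus[symmetric] del: ennreal_plus)
  finally show "\<exists>g. continuous_on UNIV g \<and> (\<integral>\<^sup>+y. ennreal (indicator \<Omega> y * \<bar>(f y + h y) - g y\<bar>) \<partial>lebesgue) \<le> ennreal \<epsilon>"
    using gc by blast
qed

lemma nn_restr: fixes u :: "'a \<Rightarrow> real" shows "(\<integral>\<^sup>+y. ennreal (norm (u y)) \<partial>lebesgue_on \<Omega>) = (\<integral>\<^sup>+y. ennreal (indicator \<Omega> y * \<bar>u y\<bar>) \<partial>lebesgue)"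
proof -
  have "(\<integral>\<^sup>+y. ennreal (norm (u y)) \<partial>lebesgue_on \<Omega>) = (\<integral>\<^sup>+y. ennreal (norm (u y)) * indicator \<Omega> y \<partial>lebesgue)"
    by (rule nn_integral_restrict_space) simp
  also have "\<dots> = (\<integral>\<^sup>+y. ennreal (indicator \<Omega> y * \<bar>u y\<bar>) \<partial>lebesgue)"
    by (rule nn_integral_cong) (simp add: indicator_def)
  finally show ?thesis .
qed

lemma approx_lim:
  fixes f :: "'a \<Rightarrow> real" and s :: "nat \<Rightarrow> 'a \<Rightarrow> real"
  assumes si: "\<And>i. integrable (lebesgue_on \<Omega>) (s i)" and as: "\<And>i. approx (s i)"
    and lim: "\<And>x. x \<in> space (lebesgue_on \<Omega>) \<Longrightarrow> (\<lambda>i. s i x) \<longlonglongrightarrow> f x"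
    and bd: "\<And>i x. x \<in> space (lebesgue_on \<Omega>) \<Longrightarrow> norm (s i x) \<le> 2 * norm (f x)"
    and f: "integrable (lebesgue_on \<Omega>) f"
  shows "approx f"
  unfolding approx_def
proof (intro allI impI)
  fix \<epsilon> :: real assume \<epsilon>: "\<epsilon> > 0"
  have "(\<lambda>i. (\<integral>\<^sup>+x. norm (f x - s i x) \<partial>lebesgue_on \<Omega>)) \<longlonglongrightarrow> 0"
  proof (rule nn_integral_dominated_convergence_norm[where w = "\<lambda>x. 2 * norm (f x)"])
    show "\<And>i. s i \<in> borel_measurable (lebesgue_on \<Omega>)" using si by auto
    show "f \<in> borel_measurable (lebesgue_on \<Omega>)" using f by auto
    show "(\<lambda>x. 2 * norm (f x)) \<in> borel_measurable (lebesgue_on \<Omega>)" using f by auto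
    show "\<And>j. AE x in lebesgue_on \<Omega>. norm (s j x) \<le> 2 * norm (f x)" using bd by (auto intro: AE_I2)
    show "AE x in lebesgue_on \<Omega>. (\<lambda>i. s i x) \<longlonglongrightarrow> f x" using lim by (auto intro: AE_I2)
    have I: "integrable (lebesgue_on \<Omega>) (\<lambda>x. 2 * norm (f x))" using f by auto
    have "(\<integral>\<^sup>+x. ennreal (norm (2 * norm (f x))) \<partial>lebesgue_on \<Omega>) < \<infinity>"
      using I unfolding integrable_iff_bounded by blast
    moreover have "(\<integral>\<^sup>+x. ennreal (norm (2 * norm (f x))) \<partial>lebesgue_on \<Omega>) = (\<integral>\<^sup>+x. ennreal (2 * norm (f x)) \<partial>lebesgue_on \<Omega>)"
      by (rule nn_integral_cong) simp
    ultimately show "(\<integral>\<^sup>+x. ennreal (2 * norm (f x)) \<partial>lebesgue_on \<Omega>) < \<infinity>" by simp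
  qed
  moreover have "(0::ennreal) < ennreal (\<epsilon>/2)" using \<epsilon> by simp
  ultimately have "eventually (\<lambda>i. (\<integral>\<^sup>+x. norm (f x - s i x) \<partial>lebesgue_on \<Omega>) < ennreal (\<epsilon>/2)) sequentially"
    by (rule order_tendstoD(2))
  then obtain N where "\<forall>i\<ge>N. (\<integral>\<^sup>+x. norm (f x - s i x) \<partial>lebesgue_on \<Omega>) < ennreal (\<epsilon>/2)"
    unfolding eventually_sequentially by blast
  then obtain i where i: "(\<integral>\<^sup>+x. norm (f x - s i x) \<partial>lebesgue_on \<Omega>) < ennreal (\<epsilon>/2)"
    by blast
  obtain g where g: "continuous_on UNIV g" "(\<integral>\<^sup>+y. ennreal (indicator \<Omega> y * \<bar>s i y - g y\<bar>) \<partial>lebesgue) \<le> ennreal (\<epsilon>/2)"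
    using as[of i] \<epsilon> unfolding approx_def by (meson half_gt_zero)
  have i': "(\<integral>\<^sup>+y. ennreal (indicator \<Omega> y * \<bar>f y - s i y\<bar>) \<partial>lebesgue) \<le> ennreal (\<epsilon>/2)"
    using i unfolding nn_restr[of "\<lambda>x. f x - s i x"] by (rule less_imp_le)
  have "(\<integral>\<^sup>+y. ennreal (indicator \<Omega> y * \<bar>f y - g y\<bar>) \<partial>lebesgue)
     \<le> (\<integral>\<^sup>+y. ennreal (indicator \<Omega> y * \<bar>f y - s i y\<bar>) \<partial>lebesgue) + (\<integral>\<^sup>+y. ennreal (indicator \<Omega> y * \<bar>s i y - g y\<bar>) \<partial>lebesgue)"
    by (rule tri) (auto intro: fm f si gm' g(1))
  also have "\<dots> \<le> ennreal (\<epsilon>/2) + ennreal (\<epsilon>/2)" using i' g(2) by (rule add_mono)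
  also have "\<dots> = ennreal \<epsilon>" using \<epsilon> by (simp add: ennreal_plus[symmetric] del: ennreal_plus)
  finally show "\<exists>g. continuous_on UNIV g \<and> (\<integral>\<^sup>+y. ennreal (indicator \<Omega> y * \<bar>f y - g y\<bar>) \<partial>lebesgue) \<le> ennreal \<epsilon>"
    using g(1) by blast
qed

lemma density: fixes f :: "'a \<Rightarrow> real" assumes f: "integrable (lebesgue_on \<Omega>) f" shows "approx f"
  using f
proof (induct rule: integrable_induct)
  case (base A c) show ?case by (rule approx_base[OF base(1)])
next
  case (add f g) then show ?case by (intro approx_add)
next
  case (lim f s) then show ?case by (intro approx_lim[of s f]) auto
qed

end

context S begin

lemma Tt_diff:
  assumes x: "x \<in> \<Omega>" and f: "integrable lebesgue (\<lambda>y. indicator \<Omega> y * f y)"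
    and g: "integrable lebesgue (\<lambda>y. indicator \<Omega> y * g y)"
  shows "Tt n f x - Tt n g x = Tt n (\<lambda>y. f y - g y) x"
proof -
  have "Tt n f x - Tt n g x = (\<integral>y. indicator \<Omega> y * kt n x y * f y - indicator \<Omega> y * kt n x y * g y \<partial>lebesgue)"
    unfolding Tt_def by (rule Bochner_Integration.integral_diff[symmetric]) (auto intro: int_prod x f g)
  also have "\<dots> = Tt n (\<lambda>y. f y - g y) x" unfolding Tt_def by (simp add: algebra_simps)
  finally show ?thesis .
qed

definition m\<Omega> where "m\<Omega> = measure lebesgue \<Omega>"

lemma m\<Omega>: "emeasure lebesgue \<Omega> = ennreal m\<Omega>" "m\<Omega> \<ge> 0"
  unfolding m\<Omega>_def using \<Omega>_fin by (auto simp: emeasure_eq_ennreal_measure)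

lemma main:
  fixes f :: "'a \<Rightarrow> real"
  assumes f: "integrable (lebesgue_on \<Omega>) f"
  shows "(\<forall>\<^sub>F n in sequentially. integrable (lebesgue_on \<Omega>) (T_n \<rho> \<Omega> \<eta> n f)) \<and>
         (\<lambda>n. LINT x : \<Omega> | lebesgue. \<bar>T_n \<rho> \<Omega> \<eta> n f x - f x\<bar>) \<longlonglongrightarrow> 0"
proof
  have Fi: "integrable lebesgue (\<lambda>y. indicator \<Omega> y * f y)"
    using f integrable_restrict_space[of \<Omega> lebesgue f] by simp
  have Fm: "(\<lambda>y. indicator \<Omega> y * f y) \<in> borel_measurable lebesgue" using Fi by auto
  have NF: "(\<integral>\<^sup>+y. ennreal (indicator \<Omega> y * \<bar>f y\<bar>) \<partial>lebesgue) < \<infinity>"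
  proof -
    have "(\<integral>\<^sup>+y. ennreal (norm (indicator \<Omega> y * f y)) \<partial>lebesgue) < \<infinity>"
      using Fi unfolding integrable_iff_bounded by blast
    moreover have "(\<integral>\<^sup>+y. ennreal (norm (indicator \<Omega> y * f y)) \<partial>lebesgue) = (\<integral>\<^sup>+y. ennreal (indicator \<Omega> y * \<bar>f y\<bar>) \<partial>lebesgue)"
      by (rule nn_integral_cong) (simp add: abs_mult)
    ultimately show ?thesis by simp
  qed
  have indT: "indicator \<Omega> x * T_n \<rho> \<Omega> \<eta> n h x = indicator \<Omega> x * Tt n h x" for x n h
    using T_eq[of x n h] by (cases "x \<in> \<Omega>") auto
  show "\<forall>\<^sub>F n in sequentially. integrable (lebesgue_on \<Omega>) (T_n \<rho> \<Omega> \<eta> n f)"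
    unfolding eventually_sequentially
  proof (intro exI[of _ n0] allI impI)
    fix n assume n: "n \<ge> n0"
    have "integrable lebesgue (\<lambda>x. indicator \<Omega> x * Tt n f x)"
    proof (rule integrableI_bounded)
      show "(\<lambda>x. indicator \<Omega> x * Tt n f x) \<in> borel_measurable lebesgue"
        using Tt_meas[OF Fm] by measurable
      have "(\<integral>\<^sup>+x. ennreal (norm (indicator \<Omega> x * Tt n f x)) \<partial>lebesgue) = (\<integral>\<^sup>+x. ennreal (indicator \<Omega> x * \<bar>Tt n f x\<bar>) \<partial>lebesgue)"
        by (rule nn_integral_cong) (simp add: abs_mult)
      also have "\<dots> \<le> ennreal Bc * (\<integral>\<^sup>+y. ennreal (indicator \<Omega> y * \<bar>f y\<bar>) \<partial>lebesgue)"
        by (rule opA[OF Fm n])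
      also have "\<dots> < \<infinity>" using NF by (simp add: ennreal_mult_less_top)
      finally show "(\<integral>\<^sup>+x. ennreal (norm (indicator \<Omega> x * Tt n f x)) \<partial>lebesgue) < \<infinity>" .
    qed
    then have "integrable lebesgue (\<lambda>x. indicator \<Omega> x *\<^sub>R T_n \<rho> \<Omega> \<eta> n f x)"
      by (simp add: indT)
    then show "integrable (lebesgue_on \<Omega>) (T_n \<rho> \<Omega> \<eta> n f)"
      using integrable_restrict_space[of \<Omega> lebesgue "T_n \<rho> \<Omega> \<eta> n f"] by simp
  qed
  define D where "D n = (\<integral>\<^sup>+x. ennreal (indicator \<Omega> x * \<bar>Tt n f x - f x\<bar>) \<partial>lebesgue)" for n
  have aeq: "(LINT x : \<Omega> | lebesgue. \<bar>T_n \<rho> \<Omega> \<eta> n f x - f x\<bar>) = enn2real (D n)" for n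
  proof -
    have "(LINT x : \<Omega> | lebesgue. \<bar>T_n \<rho> \<Omega> \<eta> n f x - f x\<bar>) = (\<integral>x. indicator \<Omega> x * \<bar>Tt n f x - f x\<bar> \<partial>lebesgue)"
      unfolding set_lebesgue_integral_def
    proof (rule Bochner_Integration.integral_cong[OF refl])
      fix x show "indicator \<Omega> x *\<^sub>R \<bar>T_n \<rho> \<Omega> \<eta> n f x - f x\<bar> = indicator \<Omega> x * \<bar>Tt n f x - f x\<bar>"
        using T_eq[of x n f] by (cases "x \<in> \<Omega>") auto
    qed
    also have "\<dots> = enn2real (D n)" unfolding D_def
    proof (rule integral_eq_nn_integral)
      have "(\<lambda>x. \<bar>indicator \<Omega> x * Tt n f x - indicator \<Omega> x * f x\<bar>) \<in> borel_measurable lebesgue"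
        using Tt_meas[OF Fm, of n] Fm by measurable
      then show "(\<lambda>x. indicator \<Omega> x * \<bar>Tt n f x - f x\<bar>) \<in> borel_measurable lebesgue"
        by (simp add: ind_abs)
    qed simp
    finally show ?thesis .
  qed
  show "(\<lambda>n. LINT x : \<Omega> | lebesgue. \<bar>T_n \<rho> \<Omega> \<eta> n f x - f x\<bar>) \<longlonglongrightarrow> 0"
    unfolding aeq
  proof (rule LIMSEQ_I)
    fix r :: real assume r: "r > 0"
    define \<epsilon> where "\<epsilon> = r / 2"
    have \<epsilon>: "\<epsilon> > 0" unfolding \<epsilon>_def using r by simp
    define \<delta> where "\<delta> = \<epsilon> / (2 * (Bc + 1))"
    have \<delta>: "\<delta> > 0" unfolding \<delta>_def using \<epsilon> Bc_nn by (simp add: add_nonneg_pos)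
    define e' where "e' = \<epsilon> / (2 * (m\<Omega> + 1))"
    have e': "e' > 0" unfolding e'_def using \<epsilon> m\<Omega>(2) by (simp add: add_nonneg_pos)
    obtain g where g: "continuous_on UNIV g" "(\<integral>\<^sup>+y. ennreal (indicator \<Omega> y * \<bar>f y - g y\<bar>) \<partial>lebesgue) \<le> ennreal \<delta>"
      using density[OF f] \<delta> unfolding approx_def by blast
    obtain n1 where n1: "\<And>n x. n \<ge> n1 \<Longrightarrow> x \<in> \<Omega> \<Longrightarrow> \<bar>Tt n g x - g x\<bar> \<le> e'"
      using unif[OF g(1) e'] by blast
    have Gi: "integrable lebesgue (\<lambda>y. indicator \<Omega> y * g y)" using g_int[OF g(1)] .
    have Gm: "(\<lambda>y. indicator \<Omega> y * g y) \<in> borel_measurable lebesgue" using Gi by auto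
    have FGm: "(\<lambda>y. indicator \<Omega> y * (f y - g y)) \<in> borel_measurable lebesgue"
    proof -
      have "(\<lambda>y. indicator \<Omega> y * f y - indicator \<Omega> y * g y) \<in> borel_measurable lebesgue"
        using Fm Gm by measurable
      then show ?thesis by (simp add: algebra_simps)
    qed
    have "enn2real (D n) \<le> r / 2" if n: "n \<ge> max n0 n1" for n
    proof -
      have nn0: "n \<ge> n0" and nn1: "n \<ge> n1" using n by auto
      let ?A = "\<lambda>x. ennreal (indicator \<Omega> x * \<bar>Tt n (\<lambda>y. f y - g y) x\<bar>)"
      let ?B = "\<lambda>x. ennreal (e' * indicator \<Omega> x)"
      let ?C = "\<lambda>x. ennreal (indicator \<Omega> x * \<bar>f x - g x\<bar>)"
      have pw: "ennreal (indicator \<Omega> x * \<bar>Tt n f x - f x\<bar>) \<le> ?A x + ?B x + ?C x" for x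
      proof (cases "x \<in> \<Omega>")
        case False then show ?thesis by simp
      next
        case x: True
        have "Tt n f x - f x = (Tt n f x - Tt n g x) + (Tt n g x - g x) + (g x - f x)" by simp
        also have "Tt n f x - Tt n g x = Tt n (\<lambda>y. f y - g y) x" by (rule Tt_diff[OF x Fi Gi])
        finally have "\<bar>Tt n f x - f x\<bar> \<le> \<bar>Tt n (\<lambda>y. f y - g y) x\<bar> + \<bar>Tt n g x - g x\<bar> + \<bar>g x - f x\<bar>"
          by linarith
        also have "\<dots> \<le> \<bar>Tt n (\<lambda>y. f y - g y) x\<bar> + e' + \<bar>f x - g x\<bar>" using n1[OF nn1 x] by simp
        finally have *: "\<bar>Tt n f x - f x\<bar> \<le> \<bar>Tt n (\<lambda>y. f y - g y) x\<bar> + e' + \<bar>f x - g x\<bar>" .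
        have "ennreal \<bar>Tt n f x - f x\<bar> \<le> ennreal (\<bar>Tt n (\<lambda>y. f y - g y) x\<bar> + e' + \<bar>f x - g x\<bar>)"
          using * by (rule ennreal_leI)
        also have "\<dots> = ennreal \<bar>Tt n (\<lambda>y. f y - g y) x\<bar> + ennreal e' + ennreal \<bar>f x - g x\<bar>"
          using e' by (simp add: ennreal_plus)
        finally show ?thesis using x by simp
      qed
      have Am: "?A \<in> borel_measurable lebesgue"
      proof -
        have "(\<lambda>x. \<bar>indicator \<Omega> x * Tt n (\<lambda>y. f y - g y) x\<bar>) \<in> borel_measurable lebesgue"
          using Tt_meas[OF FGm, of n] by measurable
        then show ?thesis by (simp add: abs_mult)
      qed
      have Bm: "?B \<in> borel_measurable lebesgue" by measurable
      have Cm: "?C \<in> borel_measurable lebesgue" using dm[OF Fm Gm] .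
      have "D n \<le> (\<integral>\<^sup>+x. ?A x + ?B x + ?C x \<partial>lebesgue)"
        unfolding D_def by (rule nn_integral_mono) (rule pw)
      also have "\<dots> = (\<integral>\<^sup>+x. ?A x \<partial>lebesgue) + (\<integral>\<^sup>+x. ?B x \<partial>lebesgue) + (\<integral>\<^sup>+x. ?C x \<partial>lebesgue)"
        using Am Bm Cm by (simp add: nn_integral_add)
      also have "(\<integral>\<^sup>+x. ?A x \<partial>lebesgue) \<le> ennreal Bc * ennreal \<delta>"
      proof -
        have "(\<integral>\<^sup>+x. ?A x \<partial>lebesgue) \<le> ennreal Bc * (\<integral>\<^sup>+y. ennreal (indicator \<Omega> y * \<bar>f y - g y\<bar>) \<partial>lebesgue)"
          by (rule opA[OF FGm nn0])
        also have "\<dots> \<le> ennreal Bc * ennreal \<delta>" using g(2) by (rule mult_left_mono) simp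
        finally show ?thesis .
      qed
      also have "(\<integral>\<^sup>+x. ?B x \<partial>lebesgue) = ennreal (e' * m\<Omega>)"
      proof -
        have "(\<integral>\<^sup>+x. ?B x \<partial>lebesgue) = (\<integral>\<^sup>+x. ennreal e' * indicator \<Omega> x \<partial>lebesgue)"
          by (rule nn_integral_cong) (simp add: indicator_def)
        also have "\<dots> = ennreal e' * emeasure lebesgue \<Omega>" by (simp add: nn_integral_cmult_indicator)
        also have "\<dots> = ennreal (e' * m\<Omega>)" using m\<Omega> e' by (simp add: ennreal_mult)
        finally show ?thesis .
      qed
      also have "(\<integral>\<^sup>+x. ?C x \<partial>lebesgue) \<le> ennreal \<delta>" using g(2) .
      finally have "D n \<le> ennreal Bc * ennreal \<delta> + ennreal (e' * m\<Omega>) + ennreal \<delta>"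
        by (simp add: add_mono)
      also have "\<dots> = ennreal (Bc * \<delta> + e' * m\<Omega> + \<delta>)"
        using Bc_nn \<delta> e' m\<Omega>(2) by (simp add: ennreal_mult ennreal_plus)
      finally have Dle: "D n \<le> ennreal (Bc * \<delta> + e' * m\<Omega> + \<delta>)" .
      have b1: "Bc + 1 \<noteq> 0" using Bc_nn by simp
      have "Bc * \<delta> + \<delta> = (Bc + 1) * \<delta>" by (simp add: algebra_simps)
      also have "\<dots> = \<epsilon> / 2" unfolding \<delta>_def using b1 by (simp add: field_simps)
      finally have "Bc * \<delta> + \<delta> = \<epsilon> / 2" .
      moreover have "e' * m\<Omega> \<le> \<epsilon> / 2"
      proof -
        have eq: "e' * m\<Omega> = \<epsilon> / 2 * (m\<Omega> / (m\<Omega> + 1))" unfolding e'_def using m\<Omega>(2) by (simp add: field_simps)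
        have le1: "m\<Omega> / (m\<Omega> + 1) \<le> 1" using m\<Omega>(2) by simp
        have "\<epsilon> / 2 * (m\<Omega> / (m\<Omega> + 1)) \<le> \<epsilon> / 2 * 1" using \<epsilon> le1 by (intro mult_left_mono) auto
        then show ?thesis using eq by simp
      qed
      ultimately have "Bc * \<delta> + e' * m\<Omega> + \<delta> \<le> r / 2" unfolding \<epsilon>_def by linarith
      then have "D n \<le> ennreal (r / 2)" using Dle by (meson ennreal_leI order_trans)
      then show ?thesis using r by (intro enn2real_leI) auto
    qed
    then have "norm (enn2real (D n) - 0) < r" if "n \<ge> max n0 n1" for n
    proof -
      have a: "enn2real (D n) \<le> r / 2" using that \<open>\<And>n. n \<ge> max n0 n1 \<Longrightarrow> enn2real (D n) \<le> r / 2\<close> by blast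
      have b: "enn2real (D n) \<ge> 0" by simp
      show ?thesis using a b r by simp
    qed
    then show "\<exists>no. \<forall>n\<ge>no. norm (enn2real (D n) - 0) < r" by blast
  qed
qed

end

lemma smooth_cont:
  assumes "smooth_on A f" shows "continuous_on A f"
proof -
  obtain D :: "'a list \<Rightarrow> 'a \<Rightarrow> real" where D: "\<forall>x\<in>A. D [] x = f x"
    "\<forall>vs. \<forall>x\<in>A. (D vs has_derivative (\<lambda>h. D (h # vs) x)) (at x)"
    using assms(1) unfolding smooth_on_def by blast
  have "continuous (at x) (D [])" if "x \<in> A" for x
    using D(2) that has_derivative_continuous by blast
  then have "continuous_on A (D [])" by (simp add: continuous_at_imp_continuous_on)
  then show ?thesis using D(1) continuous_on_cong by blast
qed

theorem proposition5p4:
  fixes \<Omega> :: "'a::euclidean_space set"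
    and \<rho> \<eta> f :: "'a \<Rightarrow> real"
    and \<kappa> :: real
  assumes \<Omega>_open: "open \<Omega>" and \<Omega>_bdd: "bounded \<Omega>"
    and \<rho>_smooth: "smooth_on UNIV \<rho>"
    and \<rho>_supp: "compact (closure {x. \<rho> x \<noteq> 0})"
    and \<rho>_range: "\<And>x. 0 \<le> \<rho> x \<and> \<rho> x \<le> 1"
    and \<rho>_zero: "\<And>x. \<rho> x = 0 \<longleftrightarrow> norm x \<ge> 1"
    and \<rho>_radial: "\<And>x y. norm x = norm y \<Longrightarrow> \<rho> x = \<rho> y"
    and \<rho>_half: "\<And>x z. norm x < 1/2 \<Longrightarrow> norm z = 1/2 \<Longrightarrow> \<rho> x \<ge> \<rho> z"
    and \<eta>_smooth: "smooth_on \<Omega> \<eta>"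
    and \<kappa>: "0 < \<kappa>" "\<kappa> < 1"
    and \<eta>_bounds: "\<And>x. x \<in> \<Omega> \<Longrightarrow>
        \<kappa> * infdist x (frontier \<Omega>) ^ 2 \<le> \<eta> x \<and> \<eta> x \<le> infdist x (frontier \<Omega>) ^ 2"
    and f_L1: "integrable (lebesgue_on \<Omega>) f"
  shows "(\<forall>\<^sub>F n in sequentially. integrable (lebesgue_on \<Omega>) (T_n \<rho> \<Omega> \<eta> n f)) \<and>
         (\<lambda>n. LINT x : \<Omega> | lebesgue. \<bar>T_n \<rho> \<Omega> \<eta> n f x - f x\<bar>) \<longlonglongrightarrow> 0"
proof -
  interpret S \<Omega> \<rho> \<eta> \<kappa>
  proof
    show "open \<Omega>" "bounded \<Omega>" by fact+
    show "continuous_on UNIV \<rho>" using smooth_cont[OF \<rho>_smooth] by simp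
    show "\<And>x. 0 \<le> \<rho> x \<and> \<rho> x \<le> 1" by fact
    show "\<And>x. \<rho> x = 0 \<longleftrightarrow> norm x \<ge> 1" by fact
    show "continuous_on \<Omega> \<eta>" using smooth_cont[OF \<eta>_smooth] .
    show "0 < \<kappa>" by fact
    show "\<And>x. x \<in> \<Omega> \<Longrightarrow> \<kappa> * infdist x (frontier \<Omega>) ^ 2 \<le> \<eta> x \<and> \<eta> x \<le> infdist x (frontier \<Omega>) ^ 2"
      by fact
  qed
  show ?thesis by (rule main[OF f_L1])
qed

end
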